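(* Let $n,k,t$ be positive integers with $k<n$ and $t\ge 4$, let $q$ be a prime power and $\mathcal{D}$ the Desarguesian $(t-1)$-spread of $\mathrm{PG}(nt-1,q)$. Let $\nu$ be a $\mathcal{D}_{n-k-1}$-subspace, $\Pi$ an $(nt-kt+1)$-dimensional subspace containing $\nu$ such that the points of $\mathcal{B}(\Pi)$ span an $(n-k+1)$-dimensional subspace of $\mathrm{PG}(n-1,q^t)$, $\Omega$ an $(nt-kt-2)$-dimensional subspace of $\Pi$ meeting $\nu$ in an $(nt-kt-4)$-dimensional subspace, $\Gamma$ a plane of $\Pi$ skew from $\Omega$, $\bar{B}$ a minimal blocking set of $\Gamma$ disjoint from $\nu$, and $K$ the cone with vertex $\Omega$ and base $\bar{B}$. Then $$|\mathcal{B}(K)|=|\bar{B}|(q^{nt-kt-1}-q^{nt-kt-3})+q^{nt-kt-2}+q^{nt-kt-3}+\epsilon$$ for some integer $\epsilon\ge 1$.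
   Context: Field reduction: each point of $\mathrm{PG}(n-1,q^t)$ corresponds to a $(t-1)$-dimensional subspace of $\mathrm{PG}(nt-1,q)$; these form the Desarguesian $(t-1)$-spread $\mathcal{D}$. A $\mathcal{D}_{r-1}$-subspace is an $(rt-1)$-dimensional subspace spanned by elements of $\mathcal{D}$. For $U\subseteq\mathrm{PG}(nt-1,q)$, $\mathcal{B}(U)$ is the set of elements of $\mathcal{D}$ meeting $U$, identified with points of $\mathrm{PG}(n-1,q^t)$. The cone with vertex $\Omega$ and base $\bar{B}$ is $\bigcup_{P\in\bar B}\langle P,\Omega\rangle$. A minimal blocking set of a plane is a point set meeting every line, no proper subset of which does so. *)

theory Defs
  imports "HOL-Analysis.Analysis" "HOL-Number_Theory.Prime_Powers"
begin

text \<open>F = GF(q^t) is a finite field type 'a, K \<subseteq> F is the subfield GF(q).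
  V = F^n is the type 'a^'n.  PG(n-1,q^t) = F-subspaces of V;
  PG(nt-1,q) = K-subspaces of the same vector set V (field reduction).
  Subspaces are represented by their sets of vectors; point sets of PG(nt-1,q)
  are represented by sets of vectors (a vector v \<noteq> 0 represents the point K v).\<close>

definition is_subfield :: "'a::field set \<Rightarrow> bool" where
  "is_subfield K \<longleftrightarrow> 0 \<in> K \<and> 1 \<in> K \<and> (\<forall>x\<in>K. \<forall>y\<in>K. x + y \<in> K \<and> x * y \<in> K)
     \<and> (\<forall>x\<in>K. - x \<in> K) \<and> (\<forall>x\<in>K. inverse x \<in> K)"

definition ksubspace :: "'a::field set \<Rightarrow> ('a^'n) set \<Rightarrow> bool" where
  "ksubspace K W \<longleftrightarrow> 0 \<in> W \<and> (\<forall>x\<in>W. \<forall>y\<in>W. x + y \<in> W) \<and> (\<forall>c\<in>K. \<forall>x\<in>W. c *s x \<in> W)"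

definition kspan :: "'a::field set \<Rightarrow> ('a^'n) set \<Rightarrow> ('a^'n) set" where
  "kspan K S = \<Inter>{W. ksubspace K W \<and> S \<subseteq> W}"

definition kdim :: "'a::field set \<Rightarrow> ('a^'n) set \<Rightarrow> nat" where
  "kdim K W = (LEAST d. \<exists>B. finite B \<and> card B = d \<and> B \<subseteq> W \<and> kspan K B = W)"

definition kproj_subspace :: "'a::field set \<Rightarrow> nat \<Rightarrow> ('a^'n) set \<Rightarrow> bool" where
  "kproj_subspace K d W \<longleftrightarrow> ksubspace K W \<and> kdim K W = d + 1"

text \<open>Desarguesian spread: the points of PG(n-1,q^t), i.e. 1-dimensional F-subspaces.\<close>
definition desarg_spread :: "('a::field^'n) set set" where
  "desarg_spread = {P. vec.subspace P \<and> vec.dim P = 1}"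

definition D_subspace :: "'a::field set \<Rightarrow> nat \<Rightarrow> nat \<Rightarrow> ('a^'n) set \<Rightarrow> bool" where
  "D_subspace K t r W \<longleftrightarrow> kproj_subspace K (r * t - 1) W \<and>
     (\<exists>S \<subseteq> desarg_spread. W = kspan K (\<Union>S))"

definition BU :: "('a::field^'n) set \<Rightarrow> ('a^'n) set set" where
  "BU U = {P \<in> desarg_spread. \<exists>v \<in> U. v \<noteq> 0 \<and> v \<in> P}"

definition cone :: "'a::field set \<Rightarrow> ('a^'n) set \<Rightarrow> ('a^'n) set set \<Rightarrow> ('a^'n) set" where
  "cone K Omega Bbar = (\<Union>P\<in>Bbar. kspan K (P \<union> Omega))"

definition blocking_set :: "'a::field set \<Rightarrow> ('a^'n) set \<Rightarrow> ('a^'n) set set \<Rightarrow> bool" where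
  "blocking_set K Gam B \<longleftrightarrow> (\<forall>P\<in>B. kproj_subspace K 0 P \<and> P \<subseteq> Gam) \<and>
     (\<forall>L. kproj_subspace K 1 L \<and> L \<subseteq> Gam \<longrightarrow> (\<exists>P\<in>B. P \<subseteq> L))"

definition minimal_blocking_set :: "'a::field set \<Rightarrow> ('a^'n) set \<Rightarrow> ('a^'n) set set \<Rightarrow> bool" where
  "minimal_blocking_set K Gam B \<longleftrightarrow> blocking_set K Gam B \<and>
     (\<forall>B'. B' \<subset> B \<longrightarrow> \<not> blocking_set K Gam B')"

end

theory Submission
  imports Defs
begin


lemma sf_facts:
  assumes "is_subfield K"
  shows "0 \<in> K" "1 \<in> K" "x \<in> K \<Longrightarrow> y \<in> K \<Longrightarrow> x + y \<in> K"
    "x \<in> K \<Longrightarrow> y \<in> K \<Longrightarrow> x * y \<in> K" "x \<in> K \<Longrightarrow> - x \<in> K"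
    "x \<in> K \<Longrightarrow> inverse x \<in> K" "x \<in> K \<Longrightarrow> y \<in> K \<Longrightarrow> x - y \<in> K"
proof -
  have h: "0 \<in> K" "1 \<in> K" "\<forall>x\<in>K. \<forall>y\<in>K. x + y \<in> K \<and> x * y \<in> K"
     "\<forall>x\<in>K. - x \<in> K" "\<forall>x\<in>K. inverse x \<in> K"
    using assms unfolding is_subfield_def by blast+
  show "0 \<in> K" "1 \<in> K" using h by blast+
  show "x \<in> K \<Longrightarrow> y \<in> K \<Longrightarrow> x + y \<in> K" "x \<in> K \<Longrightarrow> y \<in> K \<Longrightarrow> x * y \<in> K"
    "x \<in> K \<Longrightarrow> - x \<in> K" "x \<in> K \<Longrightarrow> inverse x \<in> K" using h by blast+
  show "x \<in> K \<Longrightarrow> y \<in> K \<Longrightarrow> x - y \<in> K" using h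
    by (metis diff_conv_add_uminus)
qed

lemma ksub_facts:
  fixes W :: "('a::field^'n) set"
  assumes "is_subfield K" "ksubspace K W"
  shows "0 \<in> W" "x \<in> W \<Longrightarrow> y \<in> W \<Longrightarrow> x + y \<in> W"
    "c \<in> K \<Longrightarrow> x \<in> W \<Longrightarrow> c *s x \<in> W"
    "x \<in> W \<Longrightarrow> - x \<in> W" "x \<in> W \<Longrightarrow> y \<in> W \<Longrightarrow> x - y \<in> W"
proof -
  show 0: "0 \<in> W" and a: "x \<in> W \<Longrightarrow> y \<in> W \<Longrightarrow> x + y \<in> W"
    and s: "c \<in> K \<Longrightarrow> x \<in> W \<Longrightarrow> c *s x \<in> W" for x y c
    using assms(2) unfolding ksubspace_def by auto
  show n: "x \<in> W \<Longrightarrow> - x \<in> W" for x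
    using s[of "-1" x] sf_facts(2,5)[OF assms(1)] by (metis vector_sneg_minus1)
  show "x \<in> W \<Longrightarrow> y \<in> W \<Longrightarrow> x - y \<in> W"
    using a n by (metis diff_conv_add_uminus)
qed

lemma ksub_sum:
  fixes W :: "('a::field^'n) set"
  assumes "is_subfield K" "ksubspace K W" "finite A" "\<And>i. i \<in> A \<Longrightarrow> f i \<in> W"
  shows "sum f A \<in> W"
  using assms(3,4)
  by (induction A rule: finite_induct) (auto intro: ksub_facts[OF assms(1,2)])

lemma ksub_Inter: "\<forall>W\<in>F. ksubspace K W \<Longrightarrow> ksubspace K (\<Inter>F)"
  unfolding ksubspace_def by auto

lemma ksub_UNIV: "ksubspace K UNIV"
  unfolding ksubspace_def by auto

lemma kspan_ksub: "ksubspace K (kspan K S)"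
  unfolding kspan_def by (rule ksub_Inter) auto

lemma kspan_sup: "S \<subseteq> kspan K S"
  unfolding kspan_def by auto

lemma kspan_least: "ksubspace K W \<Longrightarrow> S \<subseteq> W \<Longrightarrow> kspan K S \<subseteq> W"
  unfolding kspan_def by auto

lemma kspan_eq: "ksubspace K W \<Longrightarrow> kspan K W = W"
  using kspan_sup kspan_least by blast

lemma kspan_mono: "S \<subseteq> T \<Longrightarrow> kspan K S \<subseteq> kspan K T"
  by (meson kspan_ksub kspan_least kspan_sup order_trans)

definition comb :: "('a::field^'n) set \<Rightarrow> (('a^'n) \<Rightarrow> 'a) \<Rightarrow> 'a^'n" where
  "comb B c = (\<Sum>b\<in>B. c b *s b)"

lemma kspan_finite:
  fixes B :: "('a::field^'n) set"
  assumes K: "is_subfield K" and fin: "finite B"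
  shows "kspan K B = comb B ` (PiE B (\<lambda>_. K))"
proof
  let ?C = "comb B ` (PiE B (\<lambda>_. K))"
  have sub: "ksubspace K ?C"
    unfolding ksubspace_def
  proof (intro conjI ballI)
    show "0 \<in> ?C"
      by (rule image_eqI[of _ _ "restrict (\<lambda>_. 0) B"]) (auto simp: comb_def sf_facts[OF K])
  next
    fix x y assume "x \<in> ?C" "y \<in> ?C"
    then obtain c d where c: "c \<in> PiE B (\<lambda>_. K)" "x = comb B c"
       and d: "d \<in> PiE B (\<lambda>_. K)" "y = comb B d" by auto
    have "x + y = comb B (restrict (\<lambda>b. c b + d b) B)"
      unfolding c d comb_def by (simp add: vector_sadd_rdistrib sum.distrib)
    moreover have "restrict (\<lambda>b. c b + d b) B \<in> PiE B (\<lambda>_. K)"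
      using c d by (auto intro: sf_facts[OF K])
    ultimately show "x + y \<in> ?C" by blast
  next
    fix a x assume a: "a \<in> K" and "x \<in> ?C"
    then obtain c where c: "c \<in> PiE B (\<lambda>_. K)" "x = comb B c" by auto
    have "a *s x = comb B (restrict (\<lambda>b. a * c b) B)"
      unfolding c comb_def by (simp add: vec.scale_sum_right vector_smult_assoc)
    moreover have "restrict (\<lambda>b. a * c b) B \<in> PiE B (\<lambda>_. K)"
      using c a by (auto intro: sf_facts[OF K])
    ultimately show "a *s x \<in> ?C" by blast
  qed
  have "B \<subseteq> ?C"
  proof
    fix b assume b: "b \<in> B"
    have "comb B (restrict (\<lambda>x. if x = b then 1 else 0) B) = b"
    proof -
      have "(\<Sum>x\<in>B. (restrict (\<lambda>x. if x = b then 1 else 0) B) x *s x) = (\<Sum>x\<in>B. if x = b then x else 0)"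
        by (rule sum.cong) auto
      also have "\<dots> = b" using b fin by simp
      finally show ?thesis unfolding comb_def .
    qed
    moreover have "restrict (\<lambda>x. if x = b then 1 else 0) B \<in> PiE B (\<lambda>_. K)"
      by (auto simp: sf_facts[OF K])
    ultimately show "b \<in> ?C" by (metis image_eqI)
  qed
  then show "kspan K B \<subseteq> ?C" using kspan_least sub by blast
  show "?C \<subseteq> kspan K B"
  proof
    fix x assume "x \<in> ?C"
    then obtain c where c: "c \<in> PiE B (\<lambda>_. K)" "x = comb B c" by auto
    have "c i *s i \<in> kspan K B" if "i \<in> B" for i
      using that c(1) ksub_facts(3)[OF K kspan_ksub[where K=K and S=B], where c="c i" and x=i] kspan_sup[where S=B and K=K]
      by (auto simp: PiE_iff)
    then show "x \<in> kspan K B" unfolding c comb_def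
      by (intro ksub_sum[OF K kspan_ksub fin])
  qed
qed




lemma card_ksub:
  fixes W :: "('a::{field,finite}^'n) set"
  assumes K: "is_subfield K" and W: "ksubspace K W"
  shows "card W = card K ^ kdim K W"
proof -
  define P where "P d \<longleftrightarrow> (\<exists>B. finite B \<and> card B = d \<and> B \<subseteq> W \<and> kspan K B = W)" for d
  have kd: "kdim K W = (LEAST d. P d)" unfolding kdim_def P_def ..
  have "P (card W)" unfolding P_def using kspan_eq[OF W] by auto
  hence "P (kdim K W)" unfolding kd by (rule LeastI)
  then obtain B where fB: "finite B" and cB: "card B = kdim K W" and BW: "B \<subseteq> W"
    and sB: "kspan K B = W" unfolding P_def by blast
  have min: "\<not> P d" if "d < kdim K W" for d using not_less_Least[of d P] that kd by simp
  have inj: "inj_on (comb B) (PiE B (\<lambda>_. K))"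
  proof
    fix c c' assume c: "c \<in> PiE B (\<lambda>_. K)" and c': "c' \<in> PiE B (\<lambda>_. K)"
      and eq: "comb B c = comb B c'"
    show "c = c'"
    proof (rule ccontr)
      assume "c \<noteq> c'"
      then obtain b where b: "b \<in> B" and ne: "c b \<noteq> c' b"
        using c c' PiE_ext by blast
      define e where "e = c b - c' b"
      have eK: "e \<in> K" unfolding e_def using c c' b sf_facts(7)[OF K] by auto
      have e0: "e \<noteq> 0" using ne unfolding e_def by simp
      have "0 = (\<Sum>x\<in>B. (c x - c' x) *s x)"
        using eq unfolding comb_def by (simp add: vector_sub_rdistrib sum_subtractf)
      also have "\<dots> = e *s b + (\<Sum>x\<in>B-{b}. (c x - c' x) *s x)"
        unfolding e_def using sum.remove[OF fB b, of "\<lambda>x. (c x - c' x) *s x"] by simp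
      finally have "e *s b + (\<Sum>x\<in>B-{b}. (c x - c' x) *s x) = 0" by simp
      hence eb: "e *s b = - (\<Sum>x\<in>B-{b}. (c x - c' x) *s x)"
        by (simp add: eq_neg_iff_add_eq_0)
      have S: "ksubspace K (kspan K (B - {b}))" by (rule kspan_ksub)
      have "(\<Sum>x\<in>B-{b}. (c x - c' x) *s x) \<in> kspan K (B - {b})"
      proof (rule ksub_sum[OF K S])
        show "finite (B - {b})" using fB by simp
        fix x assume x: "x \<in> B - {b}"
        have "c x - c' x \<in> K" using c c' x sf_facts(7)[OF K] by auto
        moreover have "x \<in> kspan K (B - {b})" using x kspan_sup[where S="B - {b}" and K=K] by blast
        ultimately show "(c x - c' x) *s x \<in> kspan K (B - {b})"
          by (rule ksub_facts(3)[OF K S])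
      qed
      hence "e *s b \<in> kspan K (B - {b})" unfolding eb by (rule ksub_facts(4)[OF K S])
      hence "inverse e *s (e *s b) \<in> kspan K (B - {b})"
        by (rule ksub_facts(3)[OF K S sf_facts(6)[OF K eK]])
      moreover have "inverse e *s (e *s b) = b"
        using e0 by (simp only: vector_smult_assoc left_inverse[OF e0] vector_smult_lid)
      ultimately have bin: "b \<in> kspan K (B - {b})" by simp
      have "B \<subseteq> kspan K (B - {b})" using bin kspan_sup[where S="B - {b}" and K=K] by blast
      hence "W \<subseteq> kspan K (B - {b})" using sB kspan_least[OF S] by blast
      moreover have "kspan K (B - {b}) \<subseteq> W" using sB kspan_mono[of "B - {b}" B K] by blast
      ultimately have "kspan K (B - {b}) = W" by blast
      hence "P (card (B - {b}))" unfolding P_def using fB BW by blast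
      moreover have "card (B - {b}) < kdim K W" using card_Diff1_less[OF fB b] cB
        by simp
      ultimately show False using min by blast
    qed
  qed
  have "W = comb B ` (PiE B (\<lambda>_. K))" using kspan_finite[OF K fB] sB by simp
  hence "card W = card (PiE B (\<lambda>_. K))" using card_image[OF inj] by simp
  also have "\<dots> = card K ^ card B" using fB by (simp add: card_PiE)
  finally show ?thesis using cB by simp
qed

lemma kdim_card:
  fixes W :: "('a::{field,finite}^'n) set"
  assumes K: "is_subfield K" and W: "ksubspace K W" and q: "card K = q" "1 < q"
    and c: "card W = q ^ m"
  shows "kdim K W = m"
  using card_ksub[OF K W] c q by (metis power_inject_exp)

lemma kproj_card:
  fixes W :: "('a::{field,finite}^'n) set"
  assumes K: "is_subfield K" and W: "kproj_subspace K d W" and q: "card K = q"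
  shows "card W = q ^ (d + 1)" "ksubspace K W"
proof -
  show S: "ksubspace K W" using W unfolding kproj_subspace_def by blast
  have "kdim K W = d + 1" using W unfolding kproj_subspace_def by blast
  then show "card W = q ^ (d + 1)" using card_ksub[OF K S] q by metis
qed

lemma kproj_of_card:
  fixes W :: "('a::{field,finite}^'n) set"
  assumes K: "is_subfield K" and W: "ksubspace K W" and q: "card K = q" "1 < q"
    and c: "card W = q ^ (d + 1)"
  shows "kproj_subspace K d W"
  using kdim_card[OF K W q c] W unfolding kproj_subspace_def by simp




definition ssum :: "('a::field^'n) set \<Rightarrow> ('a^'n) set \<Rightarrow> ('a^'n) set" where
  "ssum U W = {x + y | x y. x \<in> U \<and> y \<in> W}"

lemma ksub_ssum:
  fixes U W :: "('a::field^'n) set"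
  assumes K: "is_subfield K" and U: "ksubspace K U" and W: "ksubspace K W"
  shows "ksubspace K (ssum U W)"
  unfolding ksubspace_def ssum_def
proof (intro conjI ballI)
  show "0 \<in> {x + y |x y. x \<in> U \<and> y \<in> W}"
    using ksub_facts(1)[OF K U] ksub_facts(1)[OF K W] by force
next
  fix a b assume "a \<in> {x + y |x y. x \<in> U \<and> y \<in> W}" "b \<in> {x + y |x y. x \<in> U \<and> y \<in> W}"
  then obtain x y x' y' where "a = x + y" "b = x' + y'" "x \<in> U" "y \<in> W" "x' \<in> U" "y' \<in> W"
    by blast
  moreover have "x + y + (x' + y') = (x + x') + (y + y')" by (simp add: algebra_simps)
  ultimately show "a + b \<in> {x + y |x y. x \<in> U \<and> y \<in> W}"
    using ksub_facts(2)[OF K U] ksub_facts(2)[OF K W] by blast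
next
  fix c a assume c: "c \<in> K" and "a \<in> {x + y |x y. x \<in> U \<and> y \<in> W}"
  then obtain x y where "a = x + y" "x \<in> U" "y \<in> W" by blast
  moreover have "c *s (x + y) = c *s x + c *s y" by (rule vector_add_ldistrib)
  ultimately show "c *s a \<in> {x + y |x y. x \<in> U \<and> y \<in> W}"
    using ksub_facts(3)[OF K U c] ksub_facts(3)[OF K W c] by blast
qed

lemma ssum_sup1:
  assumes K: "is_subfield K" and W: "ksubspace K W"
  shows "U \<subseteq> ssum U W"
proof
  fix x assume "x \<in> U"
  moreover have "x = x + 0" by simp
  ultimately show "x \<in> ssum U W" unfolding ssum_def using ksub_facts(1)[OF K W] by blast
qed

lemma ssum_sup2:
  assumes K: "is_subfield K" and U: "ksubspace K U"
  shows "W \<subseteq> ssum U W"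
proof
  fix x assume "x \<in> W"
  moreover have "x = 0 + x" by simp
  ultimately show "x \<in> ssum U W" unfolding ssum_def using ksub_facts(1)[OF K U] by blast
qed

lemma ssum_least:
  assumes K: "is_subfield K" and V: "ksubspace K V" and "U \<subseteq> V" "W \<subseteq> V"
  shows "ssum U W \<subseteq> V"
  unfolding ssum_def using ksub_facts(2)[OF K V] assms(3,4) by blast

lemma kspan_Un:
  fixes U W :: "('a::field^'n) set"
  assumes K: "is_subfield K" and U: "ksubspace K U" and W: "ksubspace K W"
  shows "kspan K (U \<union> W) = ssum U W"
proof
  show "kspan K (U \<union> W) \<subseteq> ssum U W"
    by (rule kspan_least[OF ksub_ssum[OF K U W]])
       (use ssum_sup1[OF K W] ssum_sup2[OF K U] in blast)
  have "U \<union> W \<subseteq> kspan K (U \<union> W)" by (rule kspan_sup)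
  then show "ssum U W \<subseteq> kspan K (U \<union> W)"
    by (intro ssum_least[OF K kspan_ksub]) blast+
qed

lemma card_ssum:
  fixes U W :: "('a::{field,finite}^'n) set"
  assumes K: "is_subfield K" and U: "ksubspace K U" and W: "ksubspace K W"
  shows "card (ssum U W) * card (U \<inter> W) = card U * card W"
proof -
  define F where "F s = {p \<in> U \<times> W. fst p + snd p = s}" for s
  have UW: "U \<times> W = (\<Union>s\<in>ssum U W. F s)"
    unfolding F_def ssum_def by fastforce
  have cF: "card (F s) = card (U \<inter> W)" if s: "s \<in> ssum U W" for s
  proof -
    obtain u0 w0 where s0: "s = u0 + w0" "u0 \<in> U" "w0 \<in> W" using s unfolding ssum_def by blast
    have "bij_betw (\<lambda>d. (u0 + d, w0 - d)) (U \<inter> W) (F s)"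
    proof (rule bij_betwI')
      show "\<And>x y. x \<in> U \<inter> W \<Longrightarrow> y \<in> U \<inter> W \<Longrightarrow> ((u0 + x, w0 - x) = (u0 + y, w0 - y)) = (x = y)"
        by auto
      show "(u0 + x, w0 - x) \<in> F s" if "x \<in> U \<inter> W" for x
        unfolding F_def using that s0 ksub_facts(2)[OF K U] ksub_facts(5)[OF K W] by auto
      show "\<exists>x\<in>U \<inter> W. y = (u0 + x, w0 - x)" if "y \<in> F s" for y
      proof -
        obtain u w where y0: "y = (u, w)" by (cases y)
        then have y: "y = (u, w)" "u \<in> U" "w \<in> W" "u + w = s"
          using that unfolding F_def by auto
        have "u - u0 = w0 - w" using y(4) s0(1) by (simp add: algebra_simps)
        moreover have "u - u0 \<in> U" using ksub_facts(5)[OF K U y(2) s0(2)] .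
        moreover have "w0 - w \<in> W" using ksub_facts(5)[OF K W s0(3) y(3)] .
        ultimately have "u - u0 \<in> U \<inter> W" by simp
        moreover have "y = (u0 + (u - u0), w0 - (u - u0))"
        proof -
          have "u0 + (u - u0) = u" by simp
          moreover have "w0 - (u - u0) = w" using \<open>u - u0 = w0 - w\<close> by simp
          ultimately show ?thesis using y(1) by simp
        qed
        ultimately show ?thesis by blast
      qed
    qed
    then show ?thesis by (simp add: bij_betw_same_card)
  qed
  have "card U * card W = card (U \<times> W)" by (simp add: card_cartesian_product)
  also have "\<dots> = (\<Sum>s\<in>ssum U W. card (F s))"
    unfolding UW by (rule card_UN_disjoint) (auto simp: F_def)
  also have "\<dots> = (\<Sum>s\<in>ssum U W. card (U \<inter> W))" using cF by simp
  also have "\<dots> = card (ssum U W) * card (U \<inter> W)" by simp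
  finally show ?thesis by simp
qed

lemma subfield_UNIV: "is_subfield (UNIV :: 'a::field set)"
  unfolding is_subfield_def by simp

lemma ksub_UNIV_iff: "ksubspace UNIV W \<longleftrightarrow> vec.subspace W"
  unfolding ksubspace_def vec.subspace_def by auto

lemma kspan_UNIV: "kspan UNIV S = vec.span S"
  unfolding kspan_def vec.span_def hull_def ksub_UNIV_iff ..

lemma kdim_UNIV:
  fixes W :: "('a::{field,finite}^'n) set"
  assumes W: "vec.subspace W"
  shows "kdim UNIV W = vec.dim W"
  unfolding kdim_def
proof (rule Least_equality)
  obtain B where B: "B \<subseteq> W" "vec.independent B" "W \<subseteq> vec.span B" "card B = vec.dim W"
    by (rule vec.basis_exists)
  have "vec.span B = W" using vec.span_subspace[OF B(1) B(3) W] .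
  then show "\<exists>B. finite B \<and> card B = vec.dim W \<and> B \<subseteq> W \<and> kspan UNIV B = W"
    using B by (auto simp: kspan_UNIV)
next
  fix y assume "\<exists>B. finite B \<and> card B = y \<and> B \<subseteq> W \<and> kspan UNIV B = W"
  then obtain B where "finite B" "card B = y" "B \<subseteq> W" "vec.span B = W"
    by (auto simp: kspan_UNIV)
  then show "vec.dim W \<le> y" using vec.span_card_ge_dim[of B W] by auto
qed

lemma card_vsub:
  fixes W :: "('a::{field,finite}^'n) set"
  assumes W: "vec.subspace W"
  shows "card W = CARD('a) ^ vec.dim W"
  using card_ksub[OF subfield_UNIV, of W] W kdim_UNIV[OF W] by (simp add: ksub_UNIV_iff)

lemma vsub_ksub:
  assumes "vec.subspace W" shows "ksubspace K W"
  using assms unfolding ksubspace_def vec.subspace_def by auto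

lemma spread_span: "v \<noteq> 0 \<Longrightarrow> vec.span {v} \<in> desarg_spread"
  unfolding desarg_spread_def by (simp add: vec.subspace_span)

lemma spread_eq:
  assumes P: "P \<in> desarg_spread" and v: "v \<in> P" "v \<noteq> 0"
  shows "P = vec.span {v}"
proof -
  have sP: "vec.subspace P" "vec.dim P = 1" using P unfolding desarg_spread_def by auto
  have "vec.span {v} \<subseteq> P" using v(1) sP(1) by (simp add: vec.span_minimal)
  moreover have "vec.dim (vec.span {v}) = 1" using v(2) by simp
  ultimately show ?thesis
    using vec.subspace_dim_equal[of "vec.span {v}" P] sP vec.subspace_span by auto
qed

lemma spread_sub: "P \<in> desarg_spread \<Longrightarrow> vec.subspace P"
  unfolding desarg_spread_def by auto




definition kline :: "'a::field set \<Rightarrow> 'a^'n \<Rightarrow> ('a^'n) set" where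
  "kline K u = (\<lambda>c. c *s u) ` K"

lemma kline_ksub:
  assumes K: "is_subfield K" shows "ksubspace K (kline K u)"
  unfolding ksubspace_def kline_def
proof (intro conjI ballI)
  show "0 \<in> (\<lambda>c. c *s u) ` K" using sf_facts(1)[OF K] by force
next
  fix x y assume "x \<in> (\<lambda>c. c *s u) ` K" "y \<in> (\<lambda>c. c *s u) ` K"
  then obtain c d where "c \<in> K" "d \<in> K" "x = c *s u" "y = d *s u" by blast
  moreover have "c *s u + d *s u = (c + d) *s u" by (rule vector_sadd_rdistrib[symmetric])
  ultimately show "x + y \<in> (\<lambda>c. c *s u) ` K"
    using sf_facts(3)[OF K] by (metis image_eqI)
next
  fix a x assume a: "a \<in> K" and "x \<in> (\<lambda>c. c *s u) ` K"
  then obtain c where "c \<in> K" "x = c *s u" by blast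
  moreover have "a *s (c *s u) = (a * c) *s u" by (rule vector_smult_assoc)
  ultimately show "a *s x \<in> (\<lambda>c. c *s u) ` K"
    using sf_facts(4)[OF K a] by (metis image_eqI)
qed

lemma kline_card:
  assumes "u \<noteq> 0" shows "card (kline K u) = card K"
  unfolding kline_def
  by (rule card_image) (use assms in \<open>auto simp: inj_on_def\<close>)

lemma kline_sub:
  assumes K: "is_subfield K" and W: "ksubspace K W" and u: "u \<in> W"
  shows "kline K u \<subseteq> W"
  unfolding kline_def using ksub_facts(3)[OF K W _ u] by blast

lemma kline_mem: assumes K: "is_subfield K" shows "u \<in> kline K u"
  unfolding kline_def using sf_facts(2)[OF K] by force

lemma kline_eq:
  fixes P :: "('a::{field,finite}^'n) set"
  assumes K: "is_subfield K" and P: "ksubspace K P" "card P = card K" and p: "p \<in> P" "p \<noteq> 0"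
  shows "P = kline K p"
  using card_subset_eq[OF finite kline_sub[OF K P(1) p(1)]] kline_card[OF p(2), of K] P(2) by simp

lemma kline_inter:
  fixes u v :: "'a::field^'n"
  assumes K: "is_subfield K" and v: "v \<notin> kline K u"
  shows "kline K u \<inter> kline K v = {0}"
proof
  show "kline K u \<inter> kline K v \<subseteq> {0}"
  proof
    fix x assume "x \<in> kline K u \<inter> kline K v"
    then obtain c d where c: "c \<in> K" "x = c *s u" and d: "d \<in> K" "x = d *s v"
      unfolding kline_def by blast
    show "x \<in> {0}"
    proof (cases "d = 0")
      case True then show ?thesis using d by simp
    next
      case False
      have "v = inverse d *s (d *s v)" using False by (simp add: vector_smult_assoc)
      also have "\<dots> = (inverse d * c) *s u" using c d by (simp add: vector_smult_assoc)
      finally have "v \<in> kline K u" unfolding kline_def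
        using sf_facts(4,6)[OF K] c(1) d(1) by blast
      then show ?thesis using v by blast
    qed
  qed
  show "{0} \<subseteq> kline K u \<inter> kline K v"
    using ksub_facts(1)[OF K kline_ksub[OF K]] by blast
qed

lemma exists_line:
  fixes G :: "('a::{field,finite}^'n) set"
  assumes K: "is_subfield K" and q: "card K = q" "1 < q" and G: "ksubspace K G"
    and cG: "card G = q ^ 3"
  shows "\<exists>L. kproj_subspace K 1 L \<and> L \<subseteq> G"
proof -
  have q3: "q < q ^ 3" using q(2) power_strict_increasing[of 1 3 q] by simp
  have "\<not> G \<subseteq> {0}"
  proof
    assume "G \<subseteq> {0}"
    hence "card G \<le> card {0::'a^'n}" by (intro card_mono) auto
    thus False using cG q3 q(2) by simp
  qed
  then obtain u where u: "u \<in> G" "u \<noteq> 0" by blast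
  have "\<not> G \<subseteq> kline K u"
  proof
    assume "G \<subseteq> kline K u"
    hence "card G \<le> card (kline K u)" by (intro card_mono) auto
    thus False using cG q3 kline_card[OF u(2), of K] q(1) by simp
  qed
  then obtain v where v: "v \<in> G" "v \<notin> kline K u" by blast
  have v0: "v \<noteq> 0" using v(2) ksub_facts(1)[OF K kline_ksub[OF K, of u]] by blast
  define L where "L = ssum (kline K u) (kline K v)"
  have LS: "ksubspace K L" unfolding L_def by (rule ksub_ssum[OF K kline_ksub[OF K] kline_ksub[OF K]])
  have "card L * card {0::'a^'n} = card K * card K"
    using card_ssum[OF K kline_ksub[OF K] kline_ksub[OF K], of u v] kline_inter[OF K v(2)]
      kline_card[OF u(2)] kline_card[OF v0] unfolding L_def by simp
  hence "card L = q ^ (1 + 1)" using q by (simp add: power2_eq_square)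
  hence "kproj_subspace K 1 L" by (rule kproj_of_card[OF K LS q])
  moreover have "L \<subseteq> G" unfolding L_def
    by (rule ssum_least[OF K G kline_sub[OF K G u(1)] kline_sub[OF K G v(1)]])
  ultimately show ?thesis by blast
qed




lemma nu_vsub:
  fixes nu :: "('a::field^'n) set"
  assumes K: "is_subfield K" and S: "S \<subseteq> desarg_spread" and nu: "nu = kspan K (\<Union>S)"
  shows "nu = vec.span (\<Union>S)"
proof
  show "nu \<subseteq> vec.span (\<Union>S)" unfolding nu
    by (rule kspan_least[OF vsub_ksub[OF vec.subspace_span]]) (rule vec.span_superset)
  show "vec.span (\<Union>S) \<subseteq> nu"
  proof
    fix x assume "x \<in> vec.span (\<Union>S)"
    then show "x \<in> nu"
    proof (induction rule: vec.span_induct_alt)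
      case base
      then show ?case unfolding nu using ksub_facts(1)[OF K kspan_ksub] .
    next
      case (step c x y)
      then obtain P where P: "P \<in> S" "x \<in> P" by blast
      have "vec.subspace P" using P(1) S spread_sub by blast
      hence "c *s x \<in> P" using P(2) by (simp add: vec.subspace_scale)
      hence "c *s x \<in> nu" unfolding nu using P(1) kspan_sup[where S="\<Union>S" and K=K] by blast
      then show ?case using step(2) ksub_facts(2)[OF K, where W=nu] unfolding nu
        using kspan_ksub[where K=K and S="\<Union>S"] by (simp add: nu[symmetric])
    qed
  qed
qed

lemma ksub_Int:
  assumes "ksubspace K U" "ksubspace K W" shows "ksubspace K (U \<inter> W)"
  using assms unfolding ksubspace_def by auto




theorem proposition4p12:
  fixes K :: "'a::{field,finite} set"
    and n k t q :: nat
    and nu Pi_sp Omega Gam :: "('a^'n) set"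
    and Bbar :: "('a^'n) set set"
  assumes "n = CARD('n)" and "0 < k" and "k < n" and "4 \<le> t"
    and "primepow q"
    and "is_subfield K" and "card K = q" and "CARD('a) = q ^ t"
    and "D_subspace K t (n - k) nu"
    and "kproj_subspace K (n*t - k*t + 1) Pi_sp" and "nu \<subseteq> Pi_sp"
    and "vec.dim (vec.span (\<Union>(BU Pi_sp))) = n - k + 2"
    and "kproj_subspace K (n*t - k*t - 2) Omega" and "Omega \<subseteq> Pi_sp"
    and "kproj_subspace K (n*t - k*t - 4) (Omega \<inter> nu)"
    and "kproj_subspace K 2 Gam" and "Gam \<subseteq> Pi_sp" and "Gam \<inter> Omega = {0}"
    and "minimal_blocking_set K Gam Bbar"
    and "\<forall>P\<in>Bbar. P \<inter> nu = {0}"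
  shows "\<exists>\<epsilon>::int. \<epsilon> \<ge> 1 \<and>
    int (card (BU (cone K Omega Bbar))) =
      int (card Bbar) * (int q ^ (n*t - k*t - 1) - int q ^ (n*t - k*t - 3))
      + int q ^ (n*t - k*t - 2) + int q ^ (n*t - k*t - 3) + \<epsilon>"
proof -
  have K: "is_subfield K" by fact
  have qK: "card K = q" by fact
  have q1: "1 < q" using primepow_gt_Suc_0[OF assms(5)] by simp
  define a where "a = n*t - k*t"
  have aeq: "(n - k) * t = a" unfolding a_def by (simp add: diff_mult_distrib)
  have "1 * t \<le> (n - k) * t" by (rule mult_le_mono1) (use assms(3) in simp)
  hence a4: "4 \<le> a" using aeq assms(4) by simp
  define b where "b = a - 3"
  have ab: "a = b + 3" and b1: "1 \<le> b" using a4 unfolding b_def by auto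
  obtain S where S: "S \<subseteq> desarg_spread" "nu = kspan K (\<Union>S)"
    and nuP: "kproj_subspace K ((n - k) * t - 1) nu"
    using assms(9) unfolding D_subspace_def by blast
  have nuK: "ksubspace K nu" and "card nu = q ^ ((n - k) * t - 1 + 1)"
    using kproj_card[OF K nuP qK] by auto
  moreover have "(n - k) * t - 1 + 1 = b + 3" using aeq ab by simp
  ultimately have cnu: "card nu = q ^ (b + 3)" by (simp only:)
  have PiK: "ksubspace K Pi_sp" and "card Pi_sp = q ^ (n*t - k*t + 1 + 1)"
    using kproj_card[OF K assms(10) qK] by auto
  moreover have "n*t - k*t + 1 + 1 = b + 5" using ab unfolding a_def by simp
  ultimately have cPi: "card Pi_sp = q ^ (b + 5)" by (simp only:)
  have OK: "ksubspace K Omega" and "card Omega = q ^ (n*t - k*t - 2 + 1)"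
    using kproj_card[OF K assms(13) qK] by auto
  moreover have "n*t - k*t - 2 + 1 = b + 2" using ab unfolding a_def by simp
  ultimately have cO: "card Omega = q ^ (b + 2)" by (simp only:)
  have "card (Omega \<inter> nu) = q ^ (n*t - k*t - 4 + 1)"
    using kproj_card[OF K assms(15) qK] by auto
  moreover have "n*t - k*t - 4 + 1 = b" using ab b1 unfolding a_def by simp
  ultimately have cOn: "card (Omega \<inter> nu) = q ^ b" by (simp only:)
  have GK: "ksubspace K Gam" and "card Gam = q ^ (2 + 1)"
    using kproj_card[OF K assms(16) qK] by auto
  hence cG: "card Gam = q ^ 3" by simp
  have blk: "blocking_set K Gam Bbar" using assms(19) unfolding minimal_blocking_set_def by blast
  have BP: "ksubspace K P" "card P = q" "P \<subseteq> Gam" if "P \<in> Bbar" for P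
  proof -
    have "kproj_subspace K 0 P" "P \<subseteq> Gam" using blk that unfolding blocking_set_def by auto
    then show "ksubspace K P" "card P = q" "P \<subseteq> Gam" using kproj_card[OF K _ qK, of 0 P] by auto
  qed
  have nuV: "nu = vec.span (\<Union>S)" by (rule nu_vsub[OF K S])
  hence vnu: "vec.subspace nu" by (simp add: vec.subspace_span)
  have "q ^ (t * vec.dim nu) = q ^ ((n - k) * t)"
    using card_vsub[OF vnu] cnu assms(8) aeq ab by (simp add: power_mult)
  hence "t * vec.dim nu = (n - k) * t" using q1 by (simp add: power_inject_exp)
  hence dnu: "vec.dim nu = n - k" using assms(4) by simp
  define C where "C = cone K Omega Bbar"
  have LP: "kspan K (P \<union> Omega) = ssum P Omega" if "P \<in> Bbar" for P
    using kspan_Un[OF K BP(1)[OF that] OK] .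
  have Cdef: "C = (\<Union>P\<in>Bbar. ssum P Omega)" unfolding C_def cone_def using LP by simp
  obtain L where L: "kproj_subspace K 1 L" "L \<subseteq> Gam"
    using exists_line[OF K qK q1 GK cG] by blast
  then obtain P0 where P0: "P0 \<in> Bbar" using blk unfolding blocking_set_def by blast
  have OC: "Omega \<subseteq> C" unfolding Cdef using P0 ssum_sup2[OF K BP(1)[OF P0]] by blast
  have CPi: "C \<subseteq> Pi_sp" unfolding Cdef
    using ssum_least[OF K PiK] BP(3) assms(17,14) by blast
  define X where "X = C - nu"
  have Gdiff: "p = p'" if "p \<in> Gam" "p' \<in> Gam" "w \<in> Omega" "w' \<in> Omega" "p + w = p' + w'"
    for p p' w w'
  proof -
    have "p - p' = w' - w" using that(5) by (simp add: algebra_simps)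
    moreover have "p - p' \<in> Gam" using ksub_facts(5)[OF K GK that(1,2)] .
    moreover have "w' - w \<in> Omega" using ksub_facts(5)[OF K OK that(4,3)] .
    ultimately have "p - p' \<in> Gam \<inter> Omega" by simp
    then show ?thesis using assms(18) by simp
  qed
  define Y0 where "Y0 = Omega - nu"
  define Y where "Y P = ssum P Omega - Omega - nu" for P
  have cY0: "card Y0 = q ^ (b + 2) - q ^ b"
    unfolding Y0_def using card_Diff_subset_Int[of Omega nu] cO cOn by simp
  have cY: "int (card (Y P)) \<ge> int q ^ (b + 3) - int q ^ (b + 2) - int q ^ (b + 1) + int q ^ b"
    if P: "P \<in> Bbar" for P
  proof -
    define L where "L = ssum P Omega"
    define M where "M = L \<inter> nu"
    have LK: "ksubspace K L" unfolding L_def by (rule ksub_ssum[OF K BP(1)[OF P] OK])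
    have PO: "P \<inter> Omega = {0}"
      using BP(3)[OF P] assms(18) ksub_facts(1)[OF K BP(1)[OF P]] ksub_facts(1)[OF K OK] by blast
    have "card L * card {0::'a^'n} = q * q ^ (b + 2)"
      using card_ssum[OF K BP(1)[OF P] OK] PO BP(2)[OF P] cO unfolding L_def by simp
    hence "card L = q * q ^ (b + 2)" by simp
    also have "\<dots> = q ^ (b + 3)"
    proof - have "b + 3 = Suc (b + 2)" by simp thus ?thesis by (metis power_Suc) qed
    finally have cL: "card L = q ^ (b + 3)" .
    have OL: "Omega \<subseteq> L" unfolding L_def by (rule ssum_sup2[OF K BP(1)[OF P]])
    have MK: "ksubspace K M" unfolding M_def by (rule ksub_Int[OF LK nuK])
    have "ssum M Omega \<subseteq> L" by (rule ssum_least[OF K LK]) (use OL M_def in auto)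
    hence "card (ssum M Omega) \<le> q ^ (b + 3)" using cL card_mono[OF finite] by metis
    moreover have "M \<inter> Omega = Omega \<inter> nu" using OL unfolding M_def by blast
    ultimately have "card M * q ^ (b + 2) \<le> q ^ (b + 3) * q ^ b"
      using card_ssum[OF K MK OK] cO cOn by (metis mult_le_mono1)
    also have "\<dots> = q ^ (b + 1) * q ^ (b + 2)"
    proof - have "b+3+b = (b+1)+(b+2)" by simp thus ?thesis by (metis power_add) qed
    finally have cM: "card M \<le> q ^ (b + 1)" using q1 by simp
    have "Y P = L - (Omega \<union> M)" unfolding Y_def L_def M_def by blast
    moreover have "card (Omega \<union> M) \<le> card L"
      using card_mono[OF finite, of "Omega \<union> M" L] OL unfolding M_def by auto
    ultimately have e1: "int (card (Y P)) = int (card L) - int (card (Omega \<union> M))"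
      using card_Diff_subset[of "Omega \<union> M" L] OL unfolding M_def by (auto simp: of_nat_diff)
    have "card Omega + card M = card (Omega \<union> M) + card (Omega \<inter> nu)"
      using card_Un_Int[of Omega M] \<open>M \<inter> Omega = Omega \<inter> nu\<close> by (simp add: Int_commute)
    hence e2: "int (card Omega) + int (card M) = int (card (Omega \<union> M)) + int (card (Omega \<inter> nu))"
      by (metis of_nat_add)
    have e3: "int (card L) = int q ^ (b + 3)" "int (card Omega) = int q ^ (b + 2)"
      "int (card (Omega \<inter> nu)) = int q ^ b" using cL cO cOn by simp_all
    have "int (card M) \<le> int q ^ (b + 1)" using cM by (metis of_nat_le_iff of_nat_power)
    then show ?thesis using e1 e2 e3 by linarith
  qed
  have Ydisj: "Y P \<inter> Y P' = {}" if "P \<in> Bbar" "P' \<in> Bbar" "P \<noteq> P'" for P P'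
  proof (rule ccontr)
    assume "Y P \<inter> Y P' \<noteq> {}"
    then obtain x where x: "x \<in> Y P" "x \<in> Y P'" by blast
    then obtain p w p' w' where pw: "x = p + w" "p \<in> P" "w \<in> Omega" "x = p' + w'" "p' \<in> P'" "w' \<in> Omega"
      unfolding Y_def ssum_def by blast
    have pp: "p = p'" using Gdiff[of p p' w w'] pw BP(3)[OF that(1)] BP(3)[OF that(2)] by auto
    have p0: "p \<noteq> 0" using pw x unfolding Y_def by auto
    have "P = kline K p" using kline_eq[OF K BP(1)[OF that(1)] _ pw(2) p0] BP(2)[OF that(1)] qK by simp
    moreover have "P' = kline K p" using kline_eq[OF K BP(1)[OF that(2)] _ _ p0] BP(2)[OF that(2)] qK pw(5) pp
      by simp
    ultimately show False using that(3) by simp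
  qed
  have Y0disj: "Y0 \<inter> Y P = {}" for P unfolding Y0_def Y_def by blast
  have YX: "Y0 \<union> (\<Union>P\<in>Bbar. Y P) \<subseteq> X"
    unfolding X_def Y0_def Y_def Cdef using OC Cdef by blast
  have "card (Y0 \<union> (\<Union>P\<in>Bbar. Y P)) = card Y0 + (\<Sum>P\<in>Bbar. card (Y P))"
  proof -
    have "card (\<Union>P\<in>Bbar. Y P) = (\<Sum>P\<in>Bbar. card (Y P))"
      by (rule card_UN_disjoint) (use Ydisj in auto)
    moreover have "Y0 \<inter> (\<Union>P\<in>Bbar. Y P) = {}" using Y0disj by blast
    ultimately show ?thesis by (simp add: card_Un_disjoint)
  qed
  hence "card Y0 + (\<Sum>P\<in>Bbar. card (Y P)) \<le> card X" using card_mono[OF finite YX] by simp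
  hence "int (card Y0) + (\<Sum>P\<in>Bbar. int (card (Y P))) \<le> int (card X)"
    by (metis of_nat_add of_nat_le_iff of_nat_sum)
  moreover have "int (card Bbar) * (int q ^ (b + 3) - int q ^ (b + 2) - int q ^ (b + 1) + int q ^ b)
      \<le> (\<Sum>P\<in>Bbar. int (card (Y P)))"
    by (rule sum_bounded_below) (rule cY)
  moreover have "int (card Y0) = int q ^ (b + 2) - int q ^ b"
  proof -
    have "q ^ b \<le> q ^ (b + 2)" using q1 by (simp add: power_increasing)
    then show ?thesis using cY0 by (simp add: of_nat_diff)
  qed
  ultimately have XA: "int q ^ (b + 2) - int q ^ b +
      int (card Bbar) * (int q ^ (b + 3) - int q ^ (b + 2) - int q ^ (b + 1) + int q ^ b) \<le> int (card X)"
    by linarith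
  define f :: "'a^'n \<Rightarrow> ('a^'n) set" where "f x = vec.span {x}" for x
  have X0: "x \<noteq> 0" if "x \<in> X" for x using that ksub_facts(1)[OF K nuK] unfolding X_def by auto
  have XC: "X \<subseteq> C" unfolding X_def by blast
  have fib: "card (f x \<inter> Pi_sp) \<le> q" if x: "x \<in> X" for x
  proof (rule ccontr)
    assume big: "\<not> card (f x \<inter> Pi_sp) \<le> q"
    define E where "E = f x"
    define V where "V = E \<inter> Pi_sp"
    have Es: "E \<in> desarg_spread" unfolding E_def f_def by (rule spread_span[OF X0[OF x]])
    have vE: "vec.subspace E" using spread_sub[OF Es] .
    have xE: "x \<in> E" unfolding E_def f_def by (simp add: vec.span_base)
    have VK: "ksubspace K V" unfolding V_def by (rule ksub_Int[OF vsub_ksub[OF vE] PiK])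
    have Vn: "V \<inter> nu = {0}"
    proof
      show "V \<inter> nu \<subseteq> {0}"
      proof
        fix w assume w: "w \<in> V \<inter> nu"
        show "w \<in> {0}"
        proof (rule ccontr)
          assume "w \<notin> {0}"
          hence "E = vec.span {w}" using spread_eq[OF Es] w unfolding V_def by auto
          moreover have "vec.span {w} \<subseteq> nu" using w vnu by (simp add: vec.span_minimal)
          ultimately show False using xE x unfolding X_def by blast
        qed
      qed
      show "{0} \<subseteq> V \<inter> nu" using ksub_facts(1)[OF K VK] ksub_facts(1)[OF K nuK] by blast
    qed
    have "card (ssum V nu) * card {0::'a^'n} = card V * q ^ (b + 3)"
      using card_ssum[OF K VK nuK] Vn cnu by simp
    hence cs: "card (ssum V nu) = card V * q ^ (b + 3)" by simp
    have sPi: "ssum V nu \<subseteq> Pi_sp" by (rule ssum_least[OF K PiK]) (use assms(11) V_def in auto)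
    hence "card V * q ^ (b + 3) \<le> q ^ (b + 5)" using cs cPi card_mono[OF finite sPi] by simp
    also have "\<dots> = q ^ 2 * q ^ (b + 3)"
    proof - have "b + 5 = 2 + (b + 3)" by simp thus ?thesis by (metis power_add) qed
    finally have "card V \<le> q ^ 2" using q1 by simp
    moreover have "card V = q ^ kdim K V" using card_ksub[OF K VK] qK by simp
    ultimately have "q ^ kdim K V \<le> q ^ 2" by simp
    hence "kdim K V \<le> 2" by (rule power_le_imp_le_exp[OF q1])
    moreover have "q ^ 1 < q ^ kdim K V" using big \<open>card V = q ^ kdim K V\<close>
      unfolding V_def E_def by simp
    hence "1 < kdim K V" using power_strict_increasing_iff[OF q1, of 1 "kdim K V"] by blast
    ultimately have "kdim K V = 2" by simp
    hence "card (ssum V nu) = q ^ 2 * q ^ (b + 3)" using cs \<open>card V = q ^ kdim K V\<close> by simp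
    also have "\<dots> = q ^ (b + 5)"
    proof - have "b + 5 = 2 + (b + 3)" by simp thus ?thesis by (metis power_add) qed
    finally have "ssum V nu = Pi_sp" using card_subset_eq[OF finite sPi] cPi by simp
    define T where "T = vec.span (insert x nu)"
    have vT: "vec.subspace T" unfolding T_def by (rule vec.subspace_span)
    have ET: "E \<subseteq> T" unfolding E_def f_def T_def by (rule vec.span_mono) blast
    have nuT: "nu \<subseteq> T" unfolding T_def using vec.span_superset by blast
    have "\<Union>(BU Pi_sp) \<subseteq> T"
    proof
      fix y assume "y \<in> \<Union>(BU Pi_sp)"
      then obtain E' v where E': "E' \<in> desarg_spread" "v \<in> Pi_sp" "v \<noteq> 0" "v \<in> E'" "y \<in> E'"
        unfolding BU_def by blast
      have "v \<in> ssum V nu" using E'(2) \<open>ssum V nu = Pi_sp\<close> by simp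
      then obtain y1 z1 where "v = y1 + z1" "y1 \<in> V" "z1 \<in> nu" unfolding ssum_def by blast
      hence "v \<in> T" using ET nuT vec.subspace_add[OF vT] unfolding V_def by blast
      hence "vec.span {v} \<subseteq> T" using vT by (simp add: vec.span_minimal)
      moreover have "E' = vec.span {v}" using spread_eq[OF E'(1) E'(4,3)] .
      ultimately show "y \<in> T" using E'(5) by blast
    qed
    hence "vec.span (\<Union>(BU Pi_sp)) \<subseteq> T" using vT by (simp add: vec.span_minimal)
    hence "vec.dim (vec.span (\<Union>(BU Pi_sp))) \<le> vec.dim T" by (rule vec.dim_subset)
    also have "\<dots> = vec.dim (insert x nu)" unfolding T_def by simp
    also have "\<dots> \<le> vec.dim nu + 1" by (simp add: vec.dim_insert)
    finally show False using assms(12) dnu by simp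
  qed
  have FX: "card X \<le> (q - 1) * card (f ` X)"
  proof -
    have eqX: "X = (\<Union>E\<in>f ` X. {y \<in> X. f y = E})" by blast
    have "card X = card (\<Union>E\<in>f ` X. {y \<in> X. f y = E})" by (rule arg_cong[OF eqX])
    also have "\<dots> \<le> (\<Sum>E\<in>f ` X. card {y \<in> X. f y = E})"
      by (rule card_UN_le) simp
    also have "\<dots> \<le> of_nat (card (f ` X)) * (q - 1)"
    proof (rule sum_bounded_above)
      fix E assume "E \<in> f ` X"
      then obtain x where x: "x \<in> X" "E = f x" by blast
      have "{y \<in> X. f y = E} \<subseteq> (f x \<inter> Pi_sp) - {0}"
      proof
        fix y assume y: "y \<in> {y \<in> X. f y = E}"
        have "y \<in> f y" unfolding f_def by (simp add: vec.span_base)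
        then show "y \<in> (f x \<inter> Pi_sp) - {0}" using y x X0 XC CPi by auto
      qed
      hence "card {y \<in> X. f y = E} \<le> card ((f x \<inter> Pi_sp) - {0})" by (intro card_mono) auto
      also have "\<dots> \<le> q - 1"
      proof -
        have "0 \<in> f x \<inter> Pi_sp" using ksub_facts(1)[OF K PiK] unfolding f_def
          by (simp add: vec.span_zero)
        then show ?thesis using fib[OF x(1)] by (simp add: card_Diff_singleton)
      qed
      finally show "card {y \<in> X. f y = E} \<le> q - 1" .
    qed
    finally show ?thesis by (simp add: mult.commute)
  qed
  have "\<not> Omega \<inter> nu \<subseteq> {0}"
  proof
    assume "Omega \<inter> nu \<subseteq> {0}"
    hence "card (Omega \<inter> nu) \<le> card {0::'a^'n}" by (intro card_mono) auto
    moreover have "q ^ 1 \<le> q ^ b" using q1 b1 power_increasing[of 1 b q] by simp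
    ultimately show False using cOn q1 by simp
  qed
  then obtain v where v: "v \<in> Omega" "v \<in> nu" "v \<noteq> 0" by blast
  define E0 where "E0 = vec.span {v}"
  have vE0: "v \<in> E0" unfolding E0_def by (simp add: vec.span_base)
  have vC: "v \<in> C" using OC v(1) by blast
  have "E0 \<in> desarg_spread" unfolding E0_def by (rule spread_span[OF v(3)])
  hence E0C: "E0 \<in> BU C" unfolding BU_def using vC vE0 v(3) by blast
  have E0nu: "E0 \<subseteq> nu" unfolding E0_def using v(2) vnu by (simp add: vec.span_minimal)
  have fXC: "f ` X \<subseteq> BU C"
  proof
    fix E assume "E \<in> f ` X"
    then obtain x where x: "x \<in> X" "E = f x" by blast
    have "x \<in> f x" unfolding f_def by (simp add: vec.span_base)
    moreover have "f x \<in> desarg_spread" unfolding f_def by (rule spread_span[OF X0[OF x(1)]])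
    moreover have "x \<in> C" using XC x(1) by blast
    ultimately show "E \<in> BU C" unfolding BU_def using x X0[OF x(1)] by blast
  qed
  have E0X: "E0 \<notin> f ` X"
  proof
    assume "E0 \<in> f ` X"
    then obtain x where x: "x \<in> X" "E0 = f x" by blast
    have "x \<in> f x" unfolding f_def by (simp add: vec.span_base)
    then show False using x E0nu unfolding X_def by blast
  qed
  have "card (insert E0 (f ` X)) \<le> card (BU C)"
    by (rule card_mono) (use E0C fXC in auto)
  hence CB: "card (f ` X) + 1 \<le> card (BU C)" using E0X by (simp add: card_insert_if)
  have ex: "n*t - k*t - 1 = b + 2" "n*t - k*t - 3 = b" "n*t - k*t - 2 = b + 1"
    using ab unfolding a_def by simp_all
  define N where "N = int (card Bbar) * (int q ^ (b + 2) - int q ^ b) + int q ^ (b + 1) + int q ^ b"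
  have key: "int q ^ (b + 2) - int q ^ b +
      int (card Bbar) * (int q ^ (b + 3) - int q ^ (b + 2) - int q ^ (b + 1) + int q ^ b)
      = (int q - 1) * N"
  proof -
    have pw: "int q ^ (b + 1) = int q ^ b * int q" "int q ^ (b + 2) = int q ^ b * int q * int q"
      by simp_all
    have "b + 3 = Suc (Suc (Suc b))" by simp
    hence pw3: "int q ^ (b + 3) = int q ^ b * int q * int q * int q"
      by (simp only: power_Suc mult_ac)
    show ?thesis unfolding N_def pw pw3 by algebra
  qed
  have "int (card X) \<le> int ((q - 1) * card (f ` X))" using FX by (simp only: of_nat_le_iff)
  also have "\<dots> = (int q - 1) * int (card (f ` X))" using q1 by (simp add: of_nat_diff)
  finally have "(int q - 1) * N \<le> (int q - 1) * int (card (f ` X))" using XA key by linarith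
  hence NF: "N \<le> int (card (f ` X))" using q1 by (simp add: mult_le_cancel_left_pos)
  have "N + 1 \<le> int (card (BU C))" using NF CB by linarith
  then show ?thesis unfolding ex C_def[symmetric]
    by (intro exI[of _ "int (card (BU C)) - N"]) (simp add: N_def)
qed


end
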